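(* Let $f:\{-1,1\}^k\to\{0,1\}$, $\delta\in(0,1)$, $\zeta\in\mathcal{C}_\delta(f)$, and let $\zeta'=\zeta_{S,\pi,b}$ for an arbitrary nonempty $S\subseteq[k]$, permutation $\pi$ of $S$ and $b\in\{-1,1\}^{|S|}$. Let $\Sigma$ be the $|S|\times|S|$ covariance matrix with $\Sigma_{ij}=\zeta'(i,j)-\zeta'(0,i)\zeta'(0,j)$. Then $\Sigma$ is positive semidefinite with all eigenvalues at least $\delta$.
   Context: $\mathcal{C}(f)$ is the set of symmetric $(k+1)\times(k+1)$ moment matrices $\zeta(\nu)$ (indices $0..k$: $\zeta(i,i)=1$, $\zeta(0,i)=\mathbb{E}_\nu x_i$, $\zeta(i,j)=\mathbb{E}_\nu x_ix_j$ for $i\ne j$) of distributions $\nu$ on $f^{-1}(1)$, and $\mathcal{C}_\delta(f)=\{(1-\delta)\zeta+\delta I_{k+1}:\zeta\in\mathcal{C}(f)\}$. $\zeta_{S,\pi,b}$ is the submatrix on rows/columns $\{0\}\cup S$ with $S$-coordinates permuted by $\pi$, multiplied entrywise by $(1\ b)(1\ b)^T$; its rows/columns other than $0$ are indexed $1,\dots,|S|$. *)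

theory Defs
  imports "HOL-Probability.Probability_Mass_Function" "HOL-Combinatorics.Permutations"
    "Jordan_Normal_Form.Char_Poly"
begin

definition cube :: "nat \<Rightarrow> (nat \<Rightarrow> real) set" where
  "cube k = {x. (\<forall>i\<in>{1..k}. x i = -1 \<or> x i = 1) \<and> (\<forall>i. i \<notin> {1..k} \<longrightarrow> x i = 0)}"

definition aug :: "(nat \<Rightarrow> real) \<Rightarrow> nat \<Rightarrow> real" where
  "aug x i = (if i = 0 then 1 else x i)"

definition moment_matrix :: "(nat \<Rightarrow> real) pmf \<Rightarrow> nat \<Rightarrow> nat \<Rightarrow> real" where
  "moment_matrix \<nu> i j = (if i = j then 1 else measure_pmf.expectation \<nu> (\<lambda>x. aug x i * aug x j))"

definition C_set :: "nat \<Rightarrow> ((nat \<Rightarrow> real) \<Rightarrow> int) \<Rightarrow> (nat \<Rightarrow> nat \<Rightarrow> real) set" where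
  "C_set k f = {M. \<exists>\<nu>. set_pmf \<nu> \<subseteq> {x \<in> cube k. f x = 1} \<and>
      M = (\<lambda>i j. if i \<le> k \<and> j \<le> k then moment_matrix \<nu> i j else 0)}"

definition C_delta :: "nat \<Rightarrow> ((nat \<Rightarrow> real) \<Rightarrow> int) \<Rightarrow> real \<Rightarrow> (nat \<Rightarrow> nat \<Rightarrow> real) set" where
  "C_delta k f \<delta> = {M. \<exists>Z\<in>C_set k f.
      M = (\<lambda>i j. if i \<le> k \<and> j \<le> k then (1 - \<delta>) * Z i j + \<delta> * (if i = j then 1 else 0) else 0)}"

definition sub_index :: "nat set \<Rightarrow> (nat \<Rightarrow> nat) \<Rightarrow> nat \<Rightarrow> nat" where
  "sub_index S \<pi> i = (if i = 0 then 0 else \<pi> (sorted_list_of_set S ! (i - 1)))"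

definition restrict_mm ::
  "(nat \<Rightarrow> nat \<Rightarrow> real) \<Rightarrow> nat set \<Rightarrow> (nat \<Rightarrow> nat) \<Rightarrow> (nat \<Rightarrow> real) \<Rightarrow> nat \<Rightarrow> nat \<Rightarrow> real" where
  "restrict_mm Z S \<pi> b i j =
     (if i \<le> card S \<and> j \<le> card S
      then aug b i * aug b j * Z (sub_index S \<pi> i) (sub_index S \<pi> j) else 0)"

text \<open>Covariance matrix Sigma (|S| x |S|), entry (i,j) 0-based corresponds to paper indices i+1, j+1.\<close>
definition cov_matrix :: "nat \<Rightarrow> (nat \<Rightarrow> nat \<Rightarrow> real) \<Rightarrow> real mat" where
  "cov_matrix m Z = mat m m (\<lambda>(i, j). Z (i+1) (j+1) - Z 0 (i+1) * Z 0 (j+1))"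

definition psd :: "real mat \<Rightarrow> bool" where
  "psd A \<longleftrightarrow> A \<in> carrier_mat (dim_row A) (dim_row A) \<and> A\<^sup>T = A \<and>
     (\<forall>v \<in> carrier_vec (dim_row A). 0 \<le> v \<bullet> (A *\<^sub>v v))"

end

theory Submission
  imports Defs
begin

lemma cube_vals: "x \<in> cube k \<Longrightarrow> x a = -1 \<or> x a = 1 \<or> x a = 0"
  unfolding cube_def by (cases "a \<in> {1..k}") blast+

lemma cube_abs_le: "x \<in> cube k \<Longrightarrow> \<bar>x a\<bar> \<le> 1"
  using cube_vals[of x k a] by auto

lemma cube_sq: "x \<in> cube k \<Longrightarrow> a \<in> {1..k} \<Longrightarrow> x a * x a = 1"
proof -
  assume "x \<in> cube k" "a \<in> {1..k}"
  then have "x a = -1 \<or> x a = 1" unfolding cube_def by blast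
  then show ?thesis by auto
qed

lemma pmf_integrable_bound:
  fixes g :: "'a \<Rightarrow> real"
  assumes "\<And>x. x \<in> set_pmf \<nu> \<Longrightarrow> \<bar>g x\<bar> \<le> B"
  shows "integrable (measure_pmf \<nu>) g"
  by (rule measure_pmf.integrable_const_bound[where B=B]) (auto simp: AE_measure_pmf_iff assms)

lemma pmf_integral_cong:
  fixes g h :: "'a \<Rightarrow> real"
  assumes "\<And>x. x \<in> set_pmf \<nu> \<Longrightarrow> g x = h x"
  shows "measure_pmf.expectation \<nu> g = measure_pmf.expectation \<nu> h"
  by (rule integral_cong_AE) (auto simp: AE_measure_pmf_iff assms)

lemma quad_bound:
  fixes \<nu> :: "(nat \<Rightarrow> real) pmf" and Z :: "nat \<Rightarrow> nat \<Rightarrow> real" and \<sigma> :: "nat \<Rightarrow> nat"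
    and c v :: "nat \<Rightarrow> real"
  assumes sup: "set_pmf \<nu> \<subseteq> cube k" and d0: "0 < \<delta>" and d1: "\<delta> < 1"
    and sig: "\<forall>i<n. \<sigma> i \<in> {1..k}" and inj: "\<forall>i<n. \<forall>j<n. \<sigma> i = \<sigma> j \<longrightarrow> i = j"
    and cc: "\<forall>i<n. c i * c i = 1"
    and Zp: "\<forall>a\<in>{1..k}. \<forall>b\<in>{1..k}. Z a b =
       (1-\<delta>) * measure_pmf.expectation \<nu> (\<lambda>x. x a * x b) + \<delta> * (if a = b then 1 else 0)"
    and Z0: "\<forall>a\<in>{1..k}. Z 0 a = (1-\<delta>) * measure_pmf.expectation \<nu> (\<lambda>x. x a)"
  shows "\<delta> * (\<Sum>i<n. v i * v i) \<le> (\<Sum>i<n. v i * (\<Sum>j<n. (c i * c j * Z (\<sigma> i) (\<sigma> j)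
            - c i * Z 0 (\<sigma> i) * (c j * Z 0 (\<sigma> j))) * v j))"
proof -
  define u where "u i = c i * v i" for i
  define E where "E i j = measure_pmf.expectation \<nu> (\<lambda>x. x (\<sigma> i) * x (\<sigma> j))" for i j
  define mu where "mu i = measure_pmf.expectation \<nu> (\<lambda>x. x (\<sigma> i))" for i
  define Y where "Y x = (\<Sum>i<n. u i * x (\<sigma> i))" for x :: "nat \<Rightarrow> real"
  have intp: "integrable (measure_pmf \<nu>) (\<lambda>x. x a * x b)" for a b
  proof (rule pmf_integrable_bound[where B=1])
    fix x assume "x \<in> set_pmf \<nu>"
    then have "x \<in> cube k" using sup by auto
    then have "\<bar>x a\<bar> \<le> 1" "\<bar>x b\<bar> \<le> 1" by (auto intro: cube_abs_le)
    then show "\<bar>x a * x b\<bar> \<le> 1" unfolding abs_mult by (intro mult_le_one) auto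
  qed
  have int1: "integrable (measure_pmf \<nu>) (\<lambda>x. x a)" for a
    by (rule pmf_integrable_bound[where B=1]) (use sup cube_abs_le in auto)
  have intY: "integrable (measure_pmf \<nu>) Y"
    unfolding Y_def using int1 by auto
  have Ysq: "(Y x)\<^sup>2 = (\<Sum>i<n. \<Sum>j<n. u i * u j * (x (\<sigma> i) * x (\<sigma> j)))" for x
    unfolding Y_def power2_eq_square sum_product by (simp add: algebra_simps)
  have intY2: "integrable (measure_pmf \<nu>) (\<lambda>x. (Y x)\<^sup>2)"
    unfolding Ysq using intp by auto
  have EY2: "measure_pmf.expectation \<nu> (\<lambda>x. (Y x)\<^sup>2) = (\<Sum>i<n. \<Sum>j<n. u i * u j * E i j)"
    unfolding Ysq E_def using intp
    by (simp add: Bochner_Integration.integral_sum)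
  have EY: "measure_pmf.expectation \<nu> Y = (\<Sum>i<n. u i * mu i)"
    unfolding Y_def mu_def using int1
    by (simp add: Bochner_Integration.integral_sum)
  have var: "(measure_pmf.expectation \<nu> Y)\<^sup>2 \<le> measure_pmf.expectation \<nu> (\<lambda>x. (Y x)\<^sup>2)"
  proof -
    have "0 \<le> measure_pmf.expectation \<nu> (\<lambda>x. (Y x - measure_pmf.expectation \<nu> Y)\<^sup>2)"
      by simp
    also have "\<dots> = measure_pmf.expectation \<nu> (\<lambda>x. (Y x)\<^sup>2) - (measure_pmf.expectation \<nu> Y)\<^sup>2"
      by (rule measure_pmf.variance_eq[OF intY intY2])
    finally show ?thesis by simp
  qed
  have trm: "v i * ((c i * c j * Z (\<sigma> i) (\<sigma> j) - c i * Z 0 (\<sigma> i) * (c j * Z 0 (\<sigma> j))) * v j)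
      = (1-\<delta>) * (u i * u j * E i j) + \<delta> * (if i = j then u i * u j else 0)
        - (1-\<delta>)\<^sup>2 * ((u i * mu i) * (u j * mu j))" if "i < n" "j < n" for i j
  proof -
    have "\<sigma> i = \<sigma> j \<longleftrightarrow> i = j" using inj that by blast
    then have zz: "Z (\<sigma> i) (\<sigma> j) = (1-\<delta>) * E i j + \<delta> * (if i = j then 1 else 0)"
      using Zp sig that unfolding E_def by auto
    have z0: "Z 0 (\<sigma> i) = (1-\<delta>) * mu i" "Z 0 (\<sigma> j) = (1-\<delta>) * mu j"
      using Z0 sig that unfolding mu_def by auto
    show ?thesis unfolding zz z0 u_def power2_eq_square by (cases "i = j") (simp_all add: algebra_simps)
  qed
  have "(\<Sum>i<n. v i * (\<Sum>j<n. (c i * c j * Z (\<sigma> i) (\<sigma> j)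
            - c i * Z 0 (\<sigma> i) * (c j * Z 0 (\<sigma> j))) * v j))
     = (\<Sum>i<n. \<Sum>j<n. (1-\<delta>) * (u i * u j * E i j) + \<delta> * (if i = j then u i * u j else 0)
        - (1-\<delta>)\<^sup>2 * ((u i * mu i) * (u j * mu j)))"
    by (simp add: sum_distrib_left trm)
  also have "\<dots> = (1-\<delta>) * (\<Sum>i<n. \<Sum>j<n. u i * u j * E i j) + \<delta> * (\<Sum>i<n. u i * u i)
       - (1-\<delta>)\<^sup>2 * (\<Sum>i<n. u i * mu i)\<^sup>2"
  proof -
    have sq: "(\<Sum>i<n. \<Sum>j<n. K * (p i * p j)) = K * (\<Sum>i<n. p i)\<^sup>2" for K and p :: "nat \<Rightarrow> real"
      unfolding power2_eq_square sum_product by (simp add: sum_distrib_left)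
    have d: "(\<Sum>i<n. \<Sum>j<n. \<delta> * (if i = j then u i * u j else 0)) = \<delta> * (\<Sum>i<n. u i * u i)"
      by (simp add: sum_distrib_left if_distrib[of "\<lambda>t. \<delta> * t"] cong: if_cong)
    have e: "(\<Sum>i<n. \<Sum>j<n. (1-\<delta>) * (u i * u j * E i j)) = (1-\<delta>) * (\<Sum>i<n. \<Sum>j<n. u i * u j * E i j)"
      by (simp add: sum_distrib_left)
    show ?thesis
      using sq[of "(1-\<delta>)\<^sup>2" "\<lambda>i. u i * mu i"] d e
      by (simp add: sum.distrib sum_subtractf)
  qed
  also have "(\<Sum>i<n. u i * u i) = (\<Sum>i<n. v i * v i)"
    using cc unfolding u_def
  proof (intro sum.cong refl)
    fix x assume "x \<in> {..<n}"
    then have "c x * c x = 1" using cc by auto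
    then show "c x * v x * (c x * v x) = v x * v x"
      by (metis mult.assoc mult.left_commute mult_1)
  qed
  finally have eq: "(\<Sum>i<n. v i * (\<Sum>j<n. (c i * c j * Z (\<sigma> i) (\<sigma> j)
            - c i * Z 0 (\<sigma> i) * (c j * Z 0 (\<sigma> j))) * v j))
      = (1-\<delta>) * measure_pmf.expectation \<nu> (\<lambda>x. (Y x)\<^sup>2) + \<delta> * (\<Sum>i<n. v i * v i)
       - (1-\<delta>)\<^sup>2 * (measure_pmf.expectation \<nu> Y)\<^sup>2"
    using EY2 EY by simp
  define V where "V = measure_pmf.expectation \<nu> (\<lambda>x. (Y x)\<^sup>2)"
  define M where "M = (measure_pmf.expectation \<nu> Y)\<^sup>2"
  have "M \<le> V" "0 \<le> M" using var unfolding V_def M_def by auto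
  then have "(1-\<delta>)\<^sup>2 * M \<le> (1-\<delta>) * V"
  proof -
    have "(1-\<delta>)\<^sup>2 * M = (1-\<delta>) * ((1-\<delta>) * M)" by (simp add: power2_eq_square)
    also have "\<dots> \<le> (1-\<delta>) * M" using d0 d1 \<open>0 \<le> M\<close>
      by (intro mult_left_mono) (auto simp: mult_le_cancel_right1 intro: mult_left_le_one_le)
    also have "\<dots> \<le> (1-\<delta>) * V" using d1 \<open>M \<le> V\<close> by (intro mult_left_mono) auto
    finally show ?thesis .
  qed
  then show ?thesis unfolding eq V_def[symmetric] M_def[symmetric] by simp
qed
theorem mainTheorem9:
  fixes k :: nat and f :: "(nat \<Rightarrow> real) \<Rightarrow> int" and \<delta> :: real
    and Z :: "nat \<Rightarrow> nat \<Rightarrow> real" and S :: "nat set" and \<pi> :: "nat \<Rightarrow> nat" and b :: "nat \<Rightarrow> real"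
  assumes "\<forall>x\<in>cube k. f x \<in> {0, 1}"
    and "0 < \<delta>" and "\<delta> < 1"
    and "Z \<in> C_delta k f \<delta>"
    and "S \<subseteq> {1..k}" and "S \<noteq> {}"
    and "\<pi> permutes S"
    and "\<forall>i\<in>{1..card S}. b i = -1 \<or> b i = 1"
  shows "psd (cov_matrix (card S) (restrict_mm Z S \<pi> b))
    \<and> (\<forall>ev. eigenvalue (cov_matrix (card S) (restrict_mm Z S \<pi> b)) ev \<longrightarrow> \<delta> \<le> ev)"
proof -
  note d0 = assms(2) and d1 = assms(3)
  define n where "n = card S"
  define A where "A = cov_matrix (card S) (restrict_mm Z S \<pi> b)"
  define \<sigma> where "\<sigma> i = \<pi> (sorted_list_of_set S ! i)" for i
  define c where "c i = b (i + 1)" for i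
  have finS: "finite S" using assms(5) finite_subset by blast
  have len: "length (sorted_list_of_set S) = n" unfolding n_def by simp
  have memS: "sorted_list_of_set S ! i \<in> S" if "i < n" for i
    using that len finS by (metis nth_mem set_sorted_list_of_set)
  have sig: "\<forall>i<n. \<sigma> i \<in> {1..k}"
    using memS permutes_in_image[OF assms(7)] assms(5) unfolding \<sigma>_def by blast
  have inj: "\<forall>i<n. \<forall>j<n. \<sigma> i = \<sigma> j \<longrightarrow> i = j"
  proof (intro allI impI)
    fix i j assume ij: "i < n" "j < n" "\<sigma> i = \<sigma> j"
    then have "sorted_list_of_set S ! i = sorted_list_of_set S ! j"
      using permutes_inj[OF assms(7)] unfolding \<sigma>_def inj_def by blast
    then show "i = j"
      using ij len nth_eq_iff_index_eq[OF distinct_sorted_list_of_set[of S]] by auto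
  qed
  have cc: "\<forall>i<n. c i * c i = 1"
  proof (intro allI impI)
    fix i assume "i < n"
    then have "i + 1 \<in> {1..card S}" unfolding n_def by simp
    then have "b (i+1) = -1 \<or> b (i+1) = 1" using assms(8) by blast
    then show "c i * c i = 1" unfolding c_def by auto
  qed
  obtain Z0 where Z0C: "Z0 \<in> C_set k f" and ZZ: "Z = (\<lambda>i j. if i \<le> k \<and> j \<le> k
      then (1 - \<delta>) * Z0 i j + \<delta> * (if i = j then 1 else 0) else 0)"
    using assms(4) unfolding C_delta_def by blast
  obtain \<nu> where supp: "set_pmf \<nu> \<subseteq> {x \<in> cube k. f x = 1}"
    and Z0d: "Z0 = (\<lambda>i j. if i \<le> k \<and> j \<le> k then moment_matrix \<nu> i j else 0)"
    using Z0C unfolding C_set_def by blast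
  have sup: "set_pmf \<nu> \<subseteq> cube k" using supp by auto
  have Zsym: "Z i j = Z j i" for i j
    unfolding ZZ Z0d moment_matrix_def by (auto simp: mult.commute)
  have Zp: "\<forall>a\<in>{1..k}. \<forall>b\<in>{1..k}. Z a b =
       (1-\<delta>) * measure_pmf.expectation \<nu> (\<lambda>x. x a * x b) + \<delta> * (if a = b then 1 else 0)"
  proof (intro ballI)
    fix a b assume ab: "a \<in> {1..k}" "b \<in> {1..k}"
    have "moment_matrix \<nu> a b = measure_pmf.expectation \<nu> (\<lambda>x. x a * x b)"
    proof (cases "a = b")
      case True
      have "measure_pmf.expectation \<nu> (\<lambda>x. x a * x b) = measure_pmf.expectation \<nu> (\<lambda>x. 1)"
        by (rule pmf_integral_cong) (use sup cube_sq ab True in auto)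
      then show ?thesis using True unfolding moment_matrix_def by simp
    next
      case False
      then show ?thesis using ab unfolding moment_matrix_def aug_def by simp
    qed
    then show "Z a b = (1-\<delta>) * measure_pmf.expectation \<nu> (\<lambda>x. x a * x b) + \<delta> * (if a = b then 1 else 0)"
      using ab unfolding ZZ Z0d by simp
  qed
  have Z0: "\<forall>a\<in>{1..k}. Z 0 a = (1-\<delta>) * measure_pmf.expectation \<nu> (\<lambda>x. x a)"
    unfolding ZZ Z0d moment_matrix_def aug_def by auto
  have Acar: "A \<in> carrier_mat n n" unfolding A_def cov_matrix_def n_def by simp
  have Aent: "A $$ (i, j) = c i * c j * Z (\<sigma> i) (\<sigma> j) - c i * Z 0 (\<sigma> i) * (c j * Z 0 (\<sigma> j))"
    if "i < n" "j < n" for i j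
    using that unfolding A_def cov_matrix_def restrict_mm_def n_def[symmetric] sub_index_def
      aug_def c_def \<sigma>_def by simp
  have Q: "\<delta> * (v \<bullet> v) \<le> v \<bullet> (A *\<^sub>v v)" if v: "v \<in> carrier_vec n" for v
  proof -
    have "v \<bullet> (A *\<^sub>v v) = (\<Sum>i<n. v $ i * (\<Sum>j<n. A $$ (i, j) * v $ j))"
      using v Acar unfolding scalar_prod_def
      by (auto simp: atLeast0LessThan index_mult_mat_vec row_def scalar_prod_def intro!: sum.cong)
    also have "\<dots> = (\<Sum>i<n. v $ i * (\<Sum>j<n. (c i * c j * Z (\<sigma> i) (\<sigma> j)
            - c i * Z 0 (\<sigma> i) * (c j * Z 0 (\<sigma> j))) * v $ j))"
      by (intro sum.cong refl) (simp add: Aent)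
    finally have eq: "v \<bullet> (A *\<^sub>v v) = \<dots>" .
    have vv: "v \<bullet> v = (\<Sum>i<n. v $ i * v $ i)"
      using v unfolding scalar_prod_def by (simp add: atLeast0LessThan)
    show ?thesis unfolding eq vv
      by (rule quad_bound[OF sup d0 d1 sig inj cc Zp Z0])
  qed
  have vvpos: "0 < v \<bullet> v" if v: "v \<in> carrier_vec n" "v \<noteq> 0\<^sub>v n" for v :: "real vec"
  proof -
    obtain i where i: "i < n" "v $ i \<noteq> 0"
      using v by (metis carrier_vecD eq_vecI index_zero_vec(1,2))
    have "v \<bullet> v = (\<Sum>j\<in>{0..<n}. v $ j * v $ j)"
      using v unfolding scalar_prod_def by simp
    also have "\<dots> > 0"
      by (rule sum_pos2[where i=i]) (use i in \<open>auto simp: zero_less_mult_iff\<close>)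
    finally show ?thesis .
  qed
  have psdA: "psd A"
    unfolding psd_def
  proof (intro conjI ballI)
    show "A \<in> carrier_mat (dim_row A) (dim_row A)" using Acar by simp
    show "A\<^sup>T = A"
      by (rule eq_matI) (use Acar in \<open>auto simp: Aent Zsym\<close>)
    fix v :: "real vec" assume "v \<in> carrier_vec (dim_row A)"
    then have v: "v \<in> carrier_vec n" using Acar by simp
    have "0 \<le> v \<bullet> v" using v unfolding scalar_prod_def by (auto intro: sum_nonneg)
    then have "0 \<le> \<delta> * (v \<bullet> v)" using d0 by simp
    then show "0 \<le> v \<bullet> (A *\<^sub>v v)" using Q[OF v] by linarith
  qed
  have evA: "\<delta> \<le> ev" if eA: "eigenvalue A ev" for ev
  proof -
    obtain v where ev: "v \<in> carrier_vec n" "v \<noteq> 0\<^sub>v n" "A *\<^sub>v v = ev \<cdot>\<^sub>v v"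
      using eA Acar unfolding eigenvalue_def eigenvector_def by auto
    have "v \<bullet> (A *\<^sub>v v) = ev * (v \<bullet> v)"
      using ev by simp
    then have "\<delta> * (v \<bullet> v) \<le> ev * (v \<bullet> v)" using Q[OF ev(1)] by simp
    then show ?thesis using vvpos[OF ev(1,2)] by simp
  qed
  show ?thesis using psdA evA unfolding A_def by blast
qed
end
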